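(* Let $d,k\ge1$ be integers, $c\in(0,\tfrac12)$, $\alpha>1$, $\varepsilon\ge0$, and let $\mathcal{A}$ be the set of all randomized algorithms whose outputs lie in $[c,1-c]^d$. Then \[ \mathrm{post}_{\mathcal{A},\alpha,k}(\varepsilon)\le R_\alpha\big(\mathrm{Bern}_k((c,\dots,c)),\mathrm{Bern}_k((1-c,\dots,1-c))\big)=dk\,r_\alpha(c). \]
   Context: For distributions $P,Q$ and $\alpha>1$, $R_\alpha(P,Q)=\frac{1}{\alpha-1}\log\int(dP/dQ)^\alpha dQ$ is the Rényi divergence of order $\alpha$, and $r_\alpha(p)=\frac{1}{\alpha-1}\log\left(p^\alpha(1-p)^{1-\alpha}+(1-p)^\alpha p^{1-\alpha}\right)$. Datasets are related by a symmetric neighboring relation $D\sim D'$; a randomized algorithm $A$ maps each dataset $D$ to a distribution $A(D)$; $\varepsilon_A(\alpha)=\sup_{D\sim D'}R_\alpha(A(D),A(D'))$. For $x\in[0,1]^d$, $\mathrm{Bern}(x)$ is the random vector in $\{0,1\}^d$ with independent coordinates, coordinate $i$ equal to $1$ with probability $x_i$; $\mathrm{Bern}_k(x)$ denotes $k$ independent runs of $\mathrm{Bern}(x)$. For a distribution $P$ on $[0,1]^d$, $\mathrm{Bern}_k(P)$ is the distribution of $\mathrm{Bern}_k(X)$ with $X\sim P$, and $\mathrm{Bern}_k(A)$ is the algorithm $D\mapsto\mathrm{Bern}_k(A(D))$. For a family $\mathcal{A}$ of algorithms with outputs in $[0,1]^d$, $\mathrm{post}_{\mathcal{A},\alpha,k}(\varepsilon)=\sup_{A\in\mathcal{A},\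 \varepsilon_A(\alpha)\le\varepsilon}\varepsilon_{\mathrm{Bern}_k(A)}(\alpha)$. *)

theory Defs
  imports "HOL-Probability.Probability"
begin

definition renyi :: "real \<Rightarrow> 'a measure \<Rightarrow> 'a measure \<Rightarrow> ereal" where
  "renyi \<alpha> P Q =
     (let I = (\<integral>\<^sup>+ x. ennreal (enn2real (RN_deriv Q P x) powr \<alpha>) \<partial>Q) in
      if absolutely_continuous Q P \<and> I < \<infinity>
      then ereal (ln (enn2real I) / (\<alpha> - 1)) else \<infinity>)"

definition r_fun :: "real \<Rightarrow> real \<Rightarrow> real" where
  "r_fun \<alpha> p = ln (p powr \<alpha> * (1 - p) powr (1 - \<alpha>) + (1 - p) powr \<alpha> * p powr (1 - \<alpha>)) / (\<alpha> - 1)"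

text \<open>Output space [0,1]^d is modelled inside the product measurable space on coordinates {..<d}.\<close>
definition out_space :: "nat \<Rightarrow> (nat \<Rightarrow> real) measure" where
  "out_space d = PiM {..<d} (\<lambda>_. borel)"

definition Bern :: "nat \<Rightarrow> (nat \<Rightarrow> real) \<Rightarrow> (nat \<Rightarrow> bool) pmf" where
  "Bern d x = Pi_pmf {..<d} False (\<lambda>i. bernoulli_pmf (x i))"

definition Bern_k :: "nat \<Rightarrow> nat \<Rightarrow> (nat \<Rightarrow> real) \<Rightarrow> (nat \<Rightarrow> nat \<Rightarrow> bool) pmf" where
  "Bern_k d k x = Pi_pmf {..<k} (\<lambda>_. False) (\<lambda>_. Bern d x)"

definition Bern_k_dist :: "nat \<Rightarrow> nat \<Rightarrow> (nat \<Rightarrow> real) measure \<Rightarrow> (nat \<Rightarrow> nat \<Rightarrow> bool) measure" where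
  "Bern_k_dist d k P = P \<bind> (\<lambda>x. measure_pmf (Bern_k d k x))"

definition Bern_k_alg :: "nat \<Rightarrow> nat \<Rightarrow> ('D \<Rightarrow> (nat \<Rightarrow> real) measure) \<Rightarrow> ('D \<Rightarrow> (nat \<Rightarrow> nat \<Rightarrow> bool) measure)" where
  "Bern_k_alg d k A = (\<lambda>D. Bern_k_dist d k (A D))"

definition eps_alg :: "('D \<Rightarrow> 'D \<Rightarrow> bool) \<Rightarrow> ('D \<Rightarrow> 'b measure) \<Rightarrow> real \<Rightarrow> ereal" where
  "eps_alg nb A \<alpha> = (SUP p \<in> {(D, D'). nb D D'}. renyi \<alpha> (A (fst p)) (A (snd p)))"

definition post :: "('D \<Rightarrow> (nat \<Rightarrow> real) measure) set \<Rightarrow> ('D \<Rightarrow> 'D \<Rightarrow> bool) \<Rightarrow> nat \<Rightarrow> real \<Rightarrow> nat \<Rightarrow> real \<Rightarrow> ereal" where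
  "post \<A> nb d \<alpha> k \<epsilon> =
     (SUP A \<in> {A \<in> \<A>. eps_alg nb A \<alpha> \<le> ereal \<epsilon>}. eps_alg nb (Bern_k_alg d k A) \<alpha>)"

definition algs_box :: "nat \<Rightarrow> real \<Rightarrow> ('D \<Rightarrow> (nat \<Rightarrow> real) measure) set" where
  "algs_box d c = {A. \<forall>D. A D \<in> space (prob_algebra (out_space d)) \<and>
                         (AE x in A D. \<forall>i<d. c \<le> x i \<and> x i \<le> 1 - c)}"

end

theory Submission
  imports Defs
begin

definition SS :: "nat \<Rightarrow> nat \<Rightarrow> (nat \<Rightarrow> nat \<Rightarrow> bool) set" where
  "SS d k = PiE_dflt {..<k} (\<lambda>_. False) (\<lambda>_. PiE_dflt {..<d} False (\<lambda>_. UNIV))"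

definition pb :: "nat \<Rightarrow> nat \<Rightarrow> (nat \<Rightarrow> real) \<Rightarrow> (nat \<Rightarrow> nat \<Rightarrow> bool) \<Rightarrow> real" where
  "pb d k x s = (\<Prod>j<k. \<Prod>i<d. pmf (bernoulli_pmf (x i)) (s j i))"

definition FF :: "real \<Rightarrow> real \<Rightarrow> real \<Rightarrow> real" where
  "FF \<alpha> a b = a powr \<alpha> * b powr (1 - \<alpha>) + (1 - a) powr \<alpha> * (1 - b) powr (1 - \<alpha>)"

context
begin
interpretation pmf_as_function .
lemma pmf_bern_gen: "pmf (bernoulli_pmf p) b = (if b then min 1 (max 0 p) else 1 - min 1 (max 0 p))"
  by transfer auto
end

lemma finite_SS: "finite (SS d k)"
  unfolding SS_def by (intro finite_PiE_dflt) auto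

lemma pmf_Bern_k: "pmf (Bern_k d k x) s = indicator (SS d k) s * pb d k x s"
proof -
  have b: "pmf (Bern d x) t = (if (\<forall>i. i \<notin> {..<d} \<longrightarrow> t i = False) then \<Prod>i<d. pmf (bernoulli_pmf (x i)) (t i) else 0)" for t
    unfolding Bern_def by (subst pmf_Pi) auto
  have "pmf (Bern_k d k x) s = (if (\<forall>j. j \<notin> {..<k} \<longrightarrow> s j = (\<lambda>_. False)) then \<Prod>j<k. pmf (Bern d x) (s j) else 0)"
    unfolding Bern_k_def by (subst pmf_Pi) auto
  also have "\<dots> = indicator (SS d k) s * pb d k x s"
  proof (cases "s \<in> SS d k")
    case True
    then show ?thesis unfolding pb_def b by (auto simp: SS_def PiE_dflt_def intro!: prod.cong)
  next
    case False
    then obtain j where "(j \<notin> {..<k} \<and> s j \<noteq> (\<lambda>_. False)) \<or> (j < k \<and> (\<exists>i\<ge>d. s j i))"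
      by (auto simp: SS_def PiE_dflt_def) (meson not_less)
    then show ?thesis
    proof
      assume "j \<notin> {..<k} \<and> s j \<noteq> (\<lambda>_. False)" then show ?thesis using False by auto
    next
      assume j: "j < k \<and> (\<exists>i\<ge>d. s j i)"
      then have "pmf (Bern d x) (s j) = 0" unfolding b by auto
      then have "(\<Prod>j<k. pmf (Bern d x) (s j)) = 0" using j by (intro prod_zero) auto
      then show ?thesis using False by auto
    qed
  qed
  finally show ?thesis .
qed

lemma sum_PiE_dflt_prod:
  fixes f :: "'a \<Rightarrow> 'b \<Rightarrow> 'c :: comm_semiring_1"
  assumes "finite A" "\<And>x. x \<in> A \<Longrightarrow> finite (B x)"
  shows "(\<Sum>g\<in>PiE_dflt A dflt B. \<Prod>x\<in>A. f x (g x)) = (\<Prod>x\<in>A. \<Sum>y\<in>B x. f x y)"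
proof -
  let ?h = "\<lambda>h x. if x \<in> A then h x else dflt"
  have inj: "inj_on ?h (PiE A B)"
    by (auto simp: inj_on_def fun_eq_iff PiE_def extensional_def) (metis)
  have "(\<Sum>g\<in>PiE_dflt A dflt B. \<Prod>x\<in>A. f x (g x)) = (\<Sum>g\<in>?h ` PiE A B. \<Prod>x\<in>A. f x (g x))"
    by (simp add: dflt_image_PiE)
  also have "\<dots> = (\<Sum>g\<in>PiE A B. \<Prod>x\<in>A. f x (?h g x))"
    by (subst sum.reindex[OF inj]) simp
  also have "\<dots> = (\<Sum>g\<in>PiE A B. \<Prod>x\<in>A. f x (g x))"
    by (intro sum.cong prod.cong) auto
  also have "\<dots> = (\<Prod>x\<in>A. \<Sum>y\<in>B x. f x y)"
    by (rule prod_sum_PiE[symmetric]) (use assms in auto)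
  finally show ?thesis .
qed

lemma factor:
  assumes "\<And>i. i < d \<Longrightarrow> 0 \<le> x i \<and> x i \<le> 1" "\<And>i. i < d \<Longrightarrow> 0 \<le> y i \<and> y i \<le> 1"
  shows "(\<Sum>s\<in>SS d k. pb d k x s powr \<alpha> * pb d k y s powr (1 - \<alpha>)) = (\<Prod>i<d. FF \<alpha> (x i) (y i)) ^ k"
proof -
  define g where "g i b = pmf (bernoulli_pmf (x i)) b powr \<alpha> * pmf (bernoulli_pmf (y i)) b powr (1 - \<alpha>)" for i b
  have "pb d k x s powr \<alpha> * pb d k y s powr (1 - \<alpha>) = (\<Prod>j<k. \<Prod>i<d. g i (s j i))" for s
    unfolding pb_def g_def prod_powr_distrib prod.distrib[symmetric] ..
  then have "(\<Sum>s\<in>SS d k. pb d k x s powr \<alpha> * pb d k y s powr (1 - \<alpha>)) = (\<Sum>s\<in>SS d k. \<Prod>j<k. \<Prod>i<d. g i (s j i))"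
    by simp
  also have "\<dots> = (\<Prod>j<k. \<Sum>t\<in>PiE_dflt {..<d} False (\<lambda>_. UNIV). \<Prod>i<d. g i (t i))"
    unfolding SS_def by (rule sum_PiE_dflt_prod) (auto intro: finite_PiE_dflt)
  also have "\<dots> = (\<Prod>j<k. \<Prod>i<d. \<Sum>b\<in>UNIV. g i b)"
    by (subst sum_PiE_dflt_prod) auto
  also have "\<dots> = (\<Prod>i<d. FF \<alpha> (x i) (y i)) ^ k"
    using assms by (simp add: UNIV_bool g_def FF_def add.commute)
  finally show ?thesis .
qed

lemma powr_term: assumes "(u::real) > 0" "v > 0"
  shows "v * (u / v) powr a = u powr a * v powr (1 - a)"
  using assms by (simp add: powr_divide powr_diff)

lemma renyi_density:
  fixes S :: "'a set" and u v :: "'a \<Rightarrow> real"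
  assumes fin: "finite S" and u: "\<forall>s\<in>S. u s > 0" and v: "\<forall>s\<in>S. v s > 0" and \<alpha>: "\<alpha> > 1"
  shows "renyi \<alpha> (density (count_space UNIV) (\<lambda>s. ennreal (indicator S s * u s)))
            (density (count_space UNIV) (\<lambda>s. ennreal (indicator S s * v s)))
       = ereal (ln (\<Sum>s\<in>S. u s powr \<alpha> * v s powr (1 - \<alpha>)) / (\<alpha> - 1))"
proof -
  let ?C = "count_space UNIV :: 'a measure"
  define U where "U s = ennreal (indicator S s * u s)" for s
  define V where "V s = ennreal (indicator S s * v s)" for s
  define P where "P = density ?C U"
  define Q where "Q = density ?C V"
  have "emeasure Q (space Q) = (\<integral>\<^sup>+ x. V x \<partial>?C)"
    unfolding Q_def by (simp add: emeasure_density)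
  also have "\<dots> = (\<Sum>s\<in>S. V s)"
    by (rule nn_integral_count_space') (use fin in \<open>auto simp: V_def\<close>)
  finally have "emeasure Q (space Q) \<noteq> \<infinity>" using fin by (simp add: V_def ennreal_sum_eq_top)
  then interpret Q: finite_measure Q by (rule finite_measureI)
  define h where "h s = ennreal (indicator S s * u s / v s)" for s
  have "density Q h = density ?C (\<lambda>x. V x * h x)"
    unfolding Q_def by (rule density_density_eq) auto
  also have "(\<lambda>x. V x * h x) = U"
  proof
    fix x show "V x * h x = U x"
    proof (cases "x \<in> S")
      case True
      then have "ennreal (v x) * ennreal (u x / v x) = ennreal (v x * (u x / v x))"
        using u v by (subst ennreal_mult) (auto intro!: divide_nonneg_pos less_imp_le)
      then show ?thesis using True v[rule_format, of x] unfolding V_def h_def U_def by simp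
    qed (simp add: V_def h_def U_def)
  qed
  finally have dQ: "density Q h = P" unfolding P_def .
  have hm: "h \<in> borel_measurable Q" unfolding Q_def by simp
  have ae: "AE x in Q. h x = RN_deriv Q P x"
    by (rule Q.RN_deriv_unique[OF hm dQ])
  have "(\<integral>\<^sup>+ x. ennreal (enn2real (RN_deriv Q P x) powr \<alpha>) \<partial>Q)
      = (\<integral>\<^sup>+ x. ennreal (enn2real (h x) powr \<alpha>) \<partial>Q)"
    by (rule nn_integral_cong_AE) (use ae in auto)
  also have "\<dots> = (\<integral>\<^sup>+ x. V x * ennreal (enn2real (h x) powr \<alpha>) \<partial>?C)"
    unfolding Q_def by (subst nn_integral_density) auto
  also have "\<dots> = (\<Sum>s\<in>S. V s * ennreal (enn2real (h s) powr \<alpha>))"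
    by (rule nn_integral_count_space') (use fin in \<open>auto simp: V_def\<close>)
  also have "\<dots> = (\<Sum>s\<in>S. ennreal (u s powr \<alpha> * v s powr (1 - \<alpha>)))"
  proof (rule sum.cong)
    fix s assume s: "s \<in> S"
    then have "V s * ennreal (enn2real (h s) powr \<alpha>) = ennreal (v s * (u s / v s) powr \<alpha>)"
      using u[rule_format, OF s] v[rule_format, OF s] unfolding V_def h_def by (simp add: ennreal_mult less_imp_le)
    also have "\<dots> = ennreal (u s powr \<alpha> * v s powr (1 - \<alpha>))"
      using u v s by (simp add: powr_term)
    finally show "V s * ennreal (enn2real (h s) powr \<alpha>) = ennreal (u s powr \<alpha> * v s powr (1 - \<alpha>))" .
  qed simp
  also have "\<dots> = ennreal (\<Sum>s\<in>S. u s powr \<alpha> * v s powr (1 - \<alpha>))"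
    by (rule sum_ennreal) simp
  finally have I: "(\<integral>\<^sup>+ x. ennreal (enn2real (RN_deriv Q P x) powr \<alpha>) \<partial>Q) = ennreal (\<Sum>s\<in>S. u s powr \<alpha> * v s powr (1 - \<alpha>))" .
  have ac: "absolutely_continuous Q P"
    unfolding absolutely_continuous_def
  proof
    fix A assume "A \<in> null_sets Q"
    then have "\<forall>x. x \<in> A \<longrightarrow> V x = 0"
      unfolding Q_def by (subst (asm) null_sets_density_iff) (auto simp: AE_count_space)
    then have "\<forall>x. x \<in> A \<longrightarrow> U x = 0"
      using v u unfolding V_def U_def by (metis ennreal_eq_0_iff indicator_simps(1) indicator_simps(2) mult_1 mult_zero_left not_le)
    then show "A \<in> null_sets P"
      unfolding P_def by (subst null_sets_density_iff) (auto simp: AE_count_space)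
  qed
  have nn: "0 \<le> (\<Sum>s\<in>S. u s powr \<alpha> * v s powr (1 - \<alpha>))" by (intro sum_nonneg) simp
  show ?thesis
    unfolding P_def[unfolded U_def, symmetric] Q_def[unfolded V_def, symmetric] renyi_def Let_def
    using I ac nn by simp
qed


lemma powr_convex_gen:
  assumes "p \<ge> 1 \<or> p \<le> 0"
  shows "convex_on {0<..} (\<lambda>x::real. x powr p)"
proof (rule f''_ge0_imp_convex[where f' = "\<lambda>x. p * x powr (p - 1)" and f'' = "\<lambda>x. p * ((p - 1) * x powr (p - 1 - 1))"])
  show "convex ({0<..} :: real set)" by (rule convex_real_interval)
  fix x :: real assume x: "x \<in> {0<..}"
  show "((\<lambda>x. x powr p) has_real_derivative p * x powr (p - 1)) (at x)"
    using x by (intro has_real_derivative_powr) auto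
  show "((\<lambda>x. p * x powr (p - 1)) has_real_derivative p * ((p - 1) * x powr (p - 1 - 1))) (at x)"
    using x by (intro DERIV_cmult has_real_derivative_powr) auto
  have "0 \<le> p * (p - 1)" using assms by (auto intro: mult_nonneg_nonneg mult_nonpos_nonpos)
  then show "0 \<le> p * ((p - 1) * x powr (p - 1 - 1))"
    by (simp add: mult.assoc[symmetric])
qed

lemma convex_mirror:
  assumes f: "convex_on {0<..} (f :: real \<Rightarrow> real)"
  shows "convex_on {0<..<1} (\<lambda>x. f (1 - x))"
proof (rule convex_onI)
  show "convex ({0<..<1} :: real set)" by (rule convex_real_interval)
  fix x y t :: real assume t0: "0 < t" and t1: "t < 1" and xy: "x \<in> {0<..<1}" "y \<in> {0<..<1}"
  have t: "0 < t \<and> t < 1" using t0 t1 by auto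
  have "1 - ((1 - t) *\<^sub>R x + t *\<^sub>R y) = (1 - t) *\<^sub>R (1 - x) + t *\<^sub>R (1 - y)"
    by (simp add: algebra_simps)
  then show "f (1 - ((1 - t) *\<^sub>R x + t *\<^sub>R y)) \<le> (1 - t) * f (1 - x) + t * f (1 - y)"
    using convex_onD[OF f, of t "1 - x" "1 - y"] xy t by auto
qed

lemma convex_FF_a:
  assumes "\<alpha> > 1"
  shows "convex_on {0<..<1} (\<lambda>a. FF \<alpha> a b)"
proof -
  have c1: "convex_on {0<..<1} (\<lambda>x::real. x powr \<alpha>)"
    by (rule convex_on_subset[OF powr_convex_gen]) (use assms in auto)
  have c2: "convex_on {0<..<1} (\<lambda>x::real. (1 - x) powr \<alpha>)"
    by (rule convex_mirror[OF powr_convex_gen]) (use assms in auto)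
  have "convex_on {0<..<1} (\<lambda>a. b powr (1 - \<alpha>) * a powr \<alpha> + (1 - b) powr (1 - \<alpha>) * (1 - a) powr \<alpha>)"
    by (intro convex_on_add convex_on_cmul c1 c2) auto
  then show ?thesis unfolding FF_def by (simp add: mult.commute)
qed

lemma convex_FF_b:
  assumes "\<alpha> > 1"
  shows "convex_on {0<..<1} (\<lambda>b. FF \<alpha> a b)"
proof -
  have c1: "convex_on {0<..<1} (\<lambda>x::real. x powr (1 - \<alpha>))"
    by (rule convex_on_subset[OF powr_convex_gen]) (use assms in auto)
  have c2: "convex_on {0<..<1} (\<lambda>x::real. (1 - x) powr (1 - \<alpha>))"
    by (rule convex_mirror[OF powr_convex_gen]) (use assms in auto)
  have "convex_on {0<..<1} (\<lambda>b. a powr \<alpha> * b powr (1 - \<alpha>) + (1 - a) powr \<alpha> * (1 - b) powr (1 - \<alpha>))"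
    by (intro convex_on_add convex_on_cmul c1 c2) auto
  then show ?thesis unfolding FF_def .
qed

lemma convex_endpoints:
  fixes f :: "real \<Rightarrow> real"
  assumes f: "convex_on {0<..<1} f" and c: "0 < c" "c < 1/2" and a: "c \<le> a" "a \<le> 1 - c"
  shows "f a \<le> max (f c) (f (1 - c))"
proof -
  define t where "t = (a - c) / (1 - 2*c)"
  have t: "0 \<le> t" "t \<le> 1" using a c by (auto simp: t_def field_simps)
  have h: "t * (1 - 2*c) = a - c" using c by (simp add: t_def)
  have "a = (1 - t) *\<^sub>R c + t *\<^sub>R (1 - c)" using h by (simp add: algebra_simps)
  then have "f a \<le> (1 - t) * f c + t * f (1 - c)"
    using convex_onD[OF f t] c by auto
  also have "\<dots> \<le> (1 - t) * max (f c) (f (1 - c)) + t * max (f c) (f (1 - c))"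
    using t by (intro add_mono mult_left_mono) auto
  finally show ?thesis by (simp add: algebra_simps)
qed

lemma FF_ge1:
  assumes "0 < c" "c < 1" "\<alpha> > 1"
  shows "1 \<le> FF \<alpha> c (1 - c)"
proof -
  have "(((1 - c) *\<^sub>R (c / (1 - c)) + c *\<^sub>R ((1 - c) / c))) powr \<alpha>
        \<le> (1 - c) * (c / (1 - c)) powr \<alpha> + c * ((1 - c) / c) powr \<alpha>"
    using assms by (intro convex_onD[OF powr_convex]) auto
  moreover have "(1 - c) *\<^sub>R (c / (1 - c)) + c *\<^sub>R ((1 - c) / c) = 1" using assms by simp
  moreover have "(1 - c) * (c / (1 - c)) powr \<alpha> = c powr \<alpha> * (1 - c) powr (1 - \<alpha>)"
    using assms by (intro powr_term) auto
  moreover have "c * ((1 - c) / c) powr \<alpha> = (1 - c) powr \<alpha> * c powr (1 - \<alpha>)"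
    using assms by (intro powr_term) auto
  ultimately show ?thesis by (simp add: FF_def)
qed

lemma FF_diag: assumes "0 < c" "c < 1" shows "FF \<alpha> c c = 1"
  using assms by (simp add: FF_def powr_add[symmetric])

lemma FF_bound:
  assumes c: "0 < c" "c < 1/2" and \<alpha>: "\<alpha> > 1"
    and a: "c \<le> a" "a \<le> 1 - c" and b: "c \<le> b" "b \<le> 1 - c"
  shows "FF \<alpha> a b \<le> FF \<alpha> c (1 - c)"
proof -
  let ?M = "FF \<alpha> c (1 - c)"
  have M1: "1 \<le> ?M" using FF_ge1[of c \<alpha>] c \<alpha> by auto
  have sym: "FF \<alpha> (1 - c) c = ?M" by (simp add: FF_def)
  have "FF \<alpha> a b \<le> max (FF \<alpha> c b) (FF \<alpha> (1 - c) b)"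
    using convex_endpoints[OF convex_FF_a[of \<alpha> b] c a] b c \<alpha> by auto
  moreover have "FF \<alpha> c b \<le> max (FF \<alpha> c c) (FF \<alpha> c (1 - c))"
    using convex_endpoints[OF convex_FF_b[of \<alpha> c] c b] c \<alpha> by auto
  moreover have "FF \<alpha> (1 - c) b \<le> max (FF \<alpha> (1 - c) c) (FF \<alpha> (1 - c) (1 - c))"
    using convex_endpoints[OF convex_FF_b[of \<alpha> "1 - c"] c b] c \<alpha> by auto
  moreover have "FF \<alpha> c c = 1" "FF \<alpha> (1 - c) (1 - c) = 1" using c by (auto intro: FF_diag)
  ultimately show ?thesis using M1 sym by auto
qed


lemma pb_nonneg: "0 \<le> pb d k x s"
  unfolding pb_def by (intro prod_nonneg) auto

lemma pb_le1: "pb d k x s \<le> 1"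
  unfolding pb_def by (intro prod_le_1 conjI prod_nonneg) (auto simp: pmf_le_1)

lemma pb_lb:
  assumes h: "\<And>i. i < d \<Longrightarrow> c \<le> x i \<and> x i \<le> 1 - c" and c: "0 < c" "c < 1/2"
  shows "(c ^ d) ^ k \<le> pb d k x s"
proof -
  have "(\<Prod>j<k. \<Prod>i<d. c) \<le> pb d k x s"
    unfolding pb_def
  proof (intro prod_mono conjI prod_nonneg)
    fix j i assume i: "i \<in> {..<d}"
    then have "0 \<le> x i" "x i \<le> 1" using h[of i] c by auto
    then show "c \<le> pmf (bernoulli_pmf (x i)) (s j i)"
      using h[of i] i by (cases "s j i") auto
  qed (use assms in auto)
  then show ?thesis by simp
qed

lemma Bern_k_density:
  "measure_pmf (Bern_k d k x) = density (count_space UNIV) (\<lambda>s. ennreal (indicator (SS d k) s * pb d k x s))"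
  by (simp add: measure_pmf_eq_density pmf_Bern_k)

lemma emeasure_density_fin:
  assumes "finite S" "\<And>s. 0 \<le> f s"
  shows "emeasure (density (count_space UNIV) (\<lambda>s. ennreal (indicator S s * f s))) A = (\<Sum>s\<in>A \<inter> S. ennreal (f s))"
proof -
  have "emeasure (density (count_space UNIV) (\<lambda>s. ennreal (indicator S s * f s))) A
      = (\<integral>\<^sup>+ s. ennreal (indicator S s * f s) * indicator A s \<partial>count_space UNIV)"
    by (subst emeasure_density) auto
  also have "\<dots> = (\<Sum>s\<in>A \<inter> S. ennreal (indicator S s * f s) * indicator A s)"
    by (rule nn_integral_count_space') (use assms in auto)
  also have "\<dots> = (\<Sum>s\<in>A \<inter> S. ennreal (f s))"
    by (intro sum.cong) auto
  finally show ?thesis .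
qed

lemma pb_measurable: "(\<lambda>x. pb d k x s) \<in> borel_measurable (out_space d)"
  unfolding pb_def pmf_bern_gen out_space_def
  by measurable

declare pb_measurable[measurable]

lemma kernel_meas: "(\<lambda>x. measure_pmf (Bern_k d k x)) \<in> measurable (out_space d) (subprob_algebra (count_space UNIV))"
proof (rule measurable_subprob_algebra)
  fix x show "subprob_space (measure_pmf (Bern_k d k x))"
    by (rule prob_space_imp_subprob_space) (rule prob_space_measure_pmf)
  show "sets (measure_pmf (Bern_k d k x)) = sets (count_space UNIV)" by simp
next
  fix A :: "(nat \<Rightarrow> nat \<Rightarrow> bool) set"
  have "(\<lambda>x. emeasure (measure_pmf (Bern_k d k x)) A) = (\<lambda>x. \<Sum>s\<in>A \<inter> SS d k. ennreal (pb d k x s))"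
    unfolding Bern_k_density by (intro ext emeasure_density_fin finite_SS pb_nonneg)
  also have "\<dots> \<in> borel_measurable (out_space d)" by measurable
  finally show "(\<lambda>x. emeasure (measure_pmf (Bern_k d k x)) A) \<in> borel_measurable (out_space d)" .
qed

lemma Bern_k_dist_density:
  assumes P: "P \<in> space (prob_algebra (out_space d))"
  shows "Bern_k_dist d k P = density (count_space UNIV) (\<lambda>s. ennreal (indicator (SS d k) s * (\<integral>x. pb d k x s \<partial>P)))"
proof -
  from P have sP: "sets P = sets (out_space d)" and pP: "prob_space P" by (auto simp: space_prob_algebra)
  interpret prob_space P by (rule pP)
  have ne: "space P \<noteq> {}" by (rule not_empty)
  have K: "(\<lambda>x. measure_pmf (Bern_k d k x)) \<in> measurable P (subprob_algebra (count_space UNIV))"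
    using kernel_meas measurable_cong_sets[OF sP refl] by blast
  have pbm: "(\<lambda>x. pb d k x s) \<in> borel_measurable P" for s
    using pb_measurable measurable_cong_sets[OF sP refl] by blast
  have int: "integrable P (\<lambda>x. pb d k x s)" for s
    by (rule integrable_const_bound[where B=1]) (auto simp: pb_nonneg pb_le1 pbm)
  show ?thesis unfolding Bern_k_dist_def
  proof (rule measure_eqI)
    show "sets (P \<bind> (\<lambda>x. measure_pmf (Bern_k d k x))) = sets (density (count_space UNIV) (\<lambda>s. ennreal (indicator (SS d k) s * (\<integral>x. pb d k x s \<partial>P))))"
      by (subst sets_bind[where N="count_space UNIV"]) (auto simp: ne)
    fix A assume "A \<in> sets (P \<bind> (\<lambda>x. measure_pmf (Bern_k d k x)))"
    have "emeasure (P \<bind> (\<lambda>x. measure_pmf (Bern_k d k x))) A = (\<integral>\<^sup>+x. emeasure (measure_pmf (Bern_k d k x)) A \<partial>P)"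
      by (rule emeasure_bind[OF ne K]) simp
    also have "\<dots> = (\<integral>\<^sup>+x. (\<Sum>s\<in>A \<inter> SS d k. ennreal (pb d k x s)) \<partial>P)"
      unfolding Bern_k_density by (intro nn_integral_cong emeasure_density_fin finite_SS pb_nonneg)
    also have "\<dots> = (\<Sum>s\<in>A \<inter> SS d k. \<integral>\<^sup>+x. ennreal (pb d k x s) \<partial>P)"
      by (rule nn_integral_sum) (use pbm in auto)
    also have "\<dots> = (\<Sum>s\<in>A \<inter> SS d k. ennreal (\<integral>x. pb d k x s \<partial>P))"
      by (intro sum.cong refl nn_integral_eq_integral int) (auto simp: pb_nonneg)
    also have "\<dots> = emeasure (density (count_space UNIV) (\<lambda>s. ennreal (indicator (SS d k) s * (\<integral>x. pb d k x s \<partial>P)))) A"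
      by (rule emeasure_density_fin[symmetric]) (auto simp: finite_SS pb_nonneg)
    finally show "emeasure (P \<bind> (\<lambda>x. measure_pmf (Bern_k d k x))) A = emeasure (density (count_space UNIV) (\<lambda>s. ennreal (indicator (SS d k) s * (\<integral>x. pb d k x s \<partial>P)))) A" .
  qed
qed


definition box :: "nat \<Rightarrow> real \<Rightarrow> (nat \<Rightarrow> real) \<Rightarrow> bool" where
  "box d c x \<longleftrightarrow> (\<forall>i<d. c \<le> x i \<and> x i \<le> 1 - c)"

lemma D_bound:
  assumes c: "0 < c" "c < 1/2" and \<alpha>: "\<alpha> > 1" and x: "box d c x" and y: "box d c y"
  shows "(\<Sum>s\<in>SS d k. pb d k x s powr \<alpha> * pb d k y s powr (1 - \<alpha>)) \<le> (\<Prod>i<d. FF \<alpha> c (1 - c)) ^ k"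
proof -
  have "(\<Sum>s\<in>SS d k. pb d k x s powr \<alpha> * pb d k y s powr (1 - \<alpha>)) = (\<Prod>i<d. FF \<alpha> (x i) (y i)) ^ k"
    by (rule factor) (use x y c in \<open>auto simp: box_def\<close>)
  also have "\<dots> \<le> (\<Prod>i<d. FF \<alpha> c (1 - c)) ^ k"
  proof (intro power_mono prod_mono conjI prod_nonneg)
    fix i assume "i \<in> {..<d}"
    then show "FF \<alpha> (x i) (y i) \<le> FF \<alpha> c (1 - c)"
      using x y by (intro FF_bound c \<alpha>) (auto simp: box_def)
  qed (auto simp: FF_def)
  finally show ?thesis .
qed

lemma mix_bound:
  assumes c: "0 < c" "c < 1/2" and \<alpha>: "\<alpha> > 1"
    and P: "P \<in> space (prob_algebra (out_space d))" and P': "P' \<in> space (prob_algebra (out_space d))"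
    and bP: "AE x in P. box d c x" and bP': "AE y in P'. box d c y"
  shows "(\<Sum>s\<in>SS d k. (\<integral>x. pb d k x s \<partial>P) powr \<alpha> * (\<integral>y. pb d k y s \<partial>P') powr (1 - \<alpha>))
           \<le> (\<Prod>i<d. FF \<alpha> c (1 - c)) ^ k"
proof -
  let ?M = "(\<Prod>i<d. FF \<alpha> c (1 - c)) ^ k"
  from P have sP: "sets P = sets (out_space d)" and pP: "prob_space P" by (auto simp: space_prob_algebra)
  from P' have sP': "sets P' = sets (out_space d)" and pP': "prob_space P'" by (auto simp: space_prob_algebra)
  interpret P: prob_space P by (rule pP)
  interpret P': prob_space P' by (rule pP')
  define lb where "lb = (c ^ d) ^ k"
  have lb: "0 < lb" using c by (simp add: lb_def)
  have pbm[measurable]: "(\<lambda>x. pb d k x s) \<in> borel_measurable P" for s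
    using pb_measurable measurable_cong_sets[OF sP refl] by blast
  have pbm'[measurable]: "(\<lambda>x. pb d k x s) \<in> borel_measurable P'" for s
    using pb_measurable measurable_cong_sets[OF sP' refl] by blast
  have lbP: "AE x in P. lb \<le> pb d k x s" for s
    using bP by eventually_elim (unfold lb_def, rule pb_lb, use c in \<open>auto simp: box_def\<close>)
  have lbP': "AE x in P'. lb \<le> pb d k x s" for s
    using bP' by eventually_elim (unfold lb_def, rule pb_lb, use c in \<open>auto simp: box_def\<close>)
  have int: "integrable P (\<lambda>x. pb d k x s)" for s
    by (rule P.integrable_const_bound[where B=1]) (auto simp: pb_nonneg pb_le1)
  have int': "integrable P' (\<lambda>x. pb d k x s)" for s
    by (rule P'.integrable_const_bound[where B=1]) (auto simp: pb_nonneg pb_le1)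
  have inta: "integrable P (\<lambda>x. pb d k x s powr \<alpha>)" for s
  proof (rule P.integrable_const_bound[where B=1])
    have "pb d k x s powr \<alpha> \<le> 1" for x
      by (rule powr_le1) (use \<alpha> pb_nonneg[of d k x s] pb_le1[of d k x s] in auto)
    then show "AE x in P. norm (pb d k x s powr \<alpha>) \<le> 1" by simp
  qed simp
  have intb: "integrable P' (\<lambda>x. pb d k x s powr (1 - \<alpha>))" for s
  proof (rule P'.integrable_const_bound[where B="lb powr (1 - \<alpha>)"])
    show "AE x in P'. norm (pb d k x s powr (1 - \<alpha>)) \<le> lb powr (1 - \<alpha>)"
      using lbP'[of s] by eventually_elim (use lb \<alpha> in \<open>auto intro!: powr_mono2'\<close>)
  qed simp
  define B where "B s = (\<integral>y. pb d k y s powr (1 - \<alpha>) \<partial>P')" for s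
  have J1: "(\<integral>x. pb d k x s \<partial>P) powr \<alpha> \<le> (\<integral>x. pb d k x s powr \<alpha> \<partial>P)" for s
  proof (rule P.jensens_inequality[where I="{0<..}" and a=0, OF int])
    show "AE x in P. pb d k x s \<in> {0<..}" using lbP[of s] by eventually_elim (use lb in auto)
    show "convex_on {0<..} (\<lambda>x. x powr \<alpha>)" by (rule powr_convex_gen) (use \<alpha> in auto)
  qed (use inta in auto)
  have J2: "(\<integral>x. pb d k x s \<partial>P') powr (1 - \<alpha>) \<le> B s" for s
    unfolding B_def
  proof (rule P'.jensens_inequality[where I="{0<..}" and a=0, OF int'])
    show "AE x in P'. pb d k x s \<in> {0<..}" using lbP'[of s] by eventually_elim (use lb in auto)
    show "convex_on {0<..} (\<lambda>x. x powr (1 - \<alpha>))" by (rule powr_convex_gen) (use \<alpha> in auto)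
  qed (use intb in auto)
  have "(\<Sum>s\<in>SS d k. (\<integral>x. pb d k x s \<partial>P) powr \<alpha> * (\<integral>y. pb d k y s \<partial>P') powr (1 - \<alpha>))
      \<le> (\<Sum>s\<in>SS d k. (\<integral>x. pb d k x s powr \<alpha> \<partial>P) * B s)"
    by (intro sum_mono mult_mono J1 J2 integral_nonneg_AE) auto
  also have "\<dots> = (\<Sum>s\<in>SS d k. (\<integral>x. pb d k x s powr \<alpha> * B s \<partial>P))"
    by simp
  also have "\<dots> = (\<integral>x. (\<Sum>s\<in>SS d k. pb d k x s powr \<alpha> * B s) \<partial>P)"
    by (rule Bochner_Integration.integral_sum[where I="SS d k" and M=P and f="\<lambda>s x. pb d k x s powr \<alpha> * B s", symmetric]) (auto intro: inta)
  also have "\<dots> \<le> ?M"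
  proof (rule P.integral_le_const)
    show "integrable P (\<lambda>x. \<Sum>s\<in>SS d k. pb d k x s powr \<alpha> * B s)"
      by (intro Bochner_Integration.integrable_sum integrable_mult_left inta)
    show "AE x in P. (\<Sum>s\<in>SS d k. pb d k x s powr \<alpha> * B s) \<le> ?M"
      using bP
    proof eventually_elim
      case (elim x)
      have "(\<Sum>s\<in>SS d k. pb d k x s powr \<alpha> * B s)
          = (\<integral>y. (\<Sum>s\<in>SS d k. pb d k x s powr \<alpha> * pb d k y s powr (1 - \<alpha>)) \<partial>P')"
        unfolding B_def by (subst Bochner_Integration.integral_sum) (auto intro: intb)
      also have "\<dots> \<le> ?M"
      proof (rule P'.integral_le_const)
        show "integrable P' (\<lambda>y. \<Sum>s\<in>SS d k. pb d k x s powr \<alpha> * pb d k y s powr (1 - \<alpha>))"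
          by (intro Bochner_Integration.integrable_sum integrable_mult_right intb)
        show "AE y in P'. (\<Sum>s\<in>SS d k. pb d k x s powr \<alpha> * pb d k y s powr (1 - \<alpha>)) \<le> ?M"
          using bP' by eventually_elim (rule D_bound[OF c \<alpha> elim])
      qed
      finally show ?case .
    qed
  qed
  finally show ?thesis .
qed


lemma w_pos:
  assumes c: "0 < c" "c < 1/2" and P: "P \<in> space (prob_algebra (out_space d))"
    and bP: "AE x in P. box d c x"
  shows "0 < (\<integral>x. pb d k x s \<partial>P)"
proof -
  from P have sP: "sets P = sets (out_space d)" and pP: "prob_space P" by (auto simp: space_prob_algebra)
  interpret P: prob_space P by (rule pP)
  have pbm: "(\<lambda>x. pb d k x s) \<in> borel_measurable P"
    using pb_measurable measurable_cong_sets[OF sP refl] by blast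
  have int: "integrable P (\<lambda>x. pb d k x s)"
    by (rule P.integrable_const_bound[where B=1]) (auto simp: pb_nonneg pb_le1 pbm)
  have "(c ^ d) ^ k \<le> (\<integral>x. pb d k x s \<partial>P)"
  proof (rule P.integral_ge_const[OF int])
    show "AE x in P. (c ^ d) ^ k \<le> pb d k x s"
      using bP by eventually_elim (rule pb_lb, use c in \<open>auto simp: box_def\<close>)
  qed
  moreover have "0 < (c ^ d) ^ k" using c by simp
  ultimately show ?thesis by linarith
qed

lemma SS_ne: "SS d k \<noteq> {}"
  unfolding SS_def by simp

theorem theorem5:
  fixes nb :: "'D \<Rightarrow> 'D \<Rightarrow> bool" and d k :: nat and c \<alpha> \<epsilon> :: real
  assumes "symp nb" and "d \<ge> 1" and "k \<ge> 1" and "0 < c" and "c < 1/2"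
    and "\<alpha> > 1" and "\<epsilon> \<ge> 0"
  shows "post (algs_box d c) nb d \<alpha> k \<epsilon>
           \<le> renyi \<alpha> (measure_pmf (Bern_k d k (\<lambda>_. c))) (measure_pmf (Bern_k d k (\<lambda>_. 1 - c)))
       \<and> renyi \<alpha> (measure_pmf (Bern_k d k (\<lambda>_. c))) (measure_pmf (Bern_k d k (\<lambda>_. 1 - c)))
           = ereal (real d * real k * r_fun \<alpha> c)"
proof -
  have c: "0 < c" "c < 1/2" and \<alpha>: "\<alpha> > 1" using assms by auto
  define M where "M = (\<Prod>i<d. FF \<alpha> c (1 - c)) ^ k"
  define R0 where "R0 = renyi \<alpha> (measure_pmf (Bern_k d k (\<lambda>_. c))) (measure_pmf (Bern_k d k (\<lambda>_. 1 - c)))"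
  have FFpos: "0 < FF \<alpha> c (1 - c)" using FF_ge1[of c \<alpha>] c \<alpha> by auto
  have Mpos: "0 < M" unfolding M_def using FFpos by simp
  have bc: "box d c (\<lambda>_. c)" "box d c (\<lambda>_. 1 - c)" using c by (auto simp: box_def)
  have lbpos: "0 < (c ^ d) ^ k" using c by simp
  have pos1: "\<forall>s\<in>SS d k. 0 < pb d k (\<lambda>_. c) s"
    using pb_lb[of d c "\<lambda>_. c"] bc lbpos c unfolding box_def by (metis less_le_trans)
  have pos2: "\<forall>s\<in>SS d k. 0 < pb d k (\<lambda>_. 1 - c) s"
    using pb_lb[of d c "\<lambda>_. 1 - c"] bc lbpos c unfolding box_def by (metis less_le_trans)
  have R0: "R0 = ereal (ln M / (\<alpha> - 1))"
    unfolding R0_def Bern_k_density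
    by (subst renyi_density[OF finite_SS pos1 pos2 \<alpha>], subst factor) (use c in \<open>auto simp: M_def\<close>)
  have "ln M = real k * (real d * ln (FF \<alpha> c (1 - c)))"
    unfolding M_def by (simp add: ln_realpow)
  moreover have "r_fun \<alpha> c = ln (FF \<alpha> c (1 - c)) / (\<alpha> - 1)"
    unfolding r_fun_def FF_def by simp
  ultimately have part2: "R0 = ereal (real d * real k * r_fun \<alpha> c)"
    unfolding R0 by (simp add: field_simps)
  have pair: "renyi \<alpha> (Bern_k_dist d k (A D)) (Bern_k_dist d k (A D')) \<le> R0"
    if A: "A \<in> algs_box d c" for A :: "'D \<Rightarrow> (nat \<Rightarrow> real) measure" and D D'
  proof -
    have P: "A D \<in> space (prob_algebra (out_space d))" and P': "A D' \<in> space (prob_algebra (out_space d))"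
      and bP: "AE x in A D. box d c x" and bP': "AE x in A D'. box d c x"
      using A unfolding algs_box_def box_def by auto
    have u: "\<forall>s\<in>SS d k. 0 < (\<integral>x. pb d k x s \<partial>A D)" using w_pos[OF c P bP] by auto
    have v: "\<forall>s\<in>SS d k. 0 < (\<integral>x. pb d k x s \<partial>A D')" using w_pos[OF c P' bP'] by auto
    define G where "G = (\<Sum>s\<in>SS d k. (\<integral>x. pb d k x s \<partial>A D) powr \<alpha> * (\<integral>y. pb d k y s \<partial>A D') powr (1 - \<alpha>))"
    have "renyi \<alpha> (Bern_k_dist d k (A D)) (Bern_k_dist d k (A D')) = ereal (ln G / (\<alpha> - 1))"
      unfolding Bern_k_dist_density[OF P] Bern_k_dist_density[OF P'] G_def
      by (rule renyi_density[OF finite_SS u v \<alpha>])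
    moreover have "G \<le> M" unfolding G_def M_def by (rule mix_bound[OF c \<alpha> P P' bP bP'])
    moreover have "0 < G" unfolding G_def
      using u v by (intro sum_pos finite_SS SS_ne mult_pos_pos) auto
    ultimately show ?thesis unfolding R0 using \<alpha> Mpos
      by (auto intro!: divide_right_mono)
  qed
  have part1: "post (algs_box d c) nb d \<alpha> k \<epsilon> \<le> R0"
    unfolding post_def eps_alg_def Bern_k_alg_def
    by (intro SUP_least) (auto intro: pair)
  show ?thesis using part1 part2 unfolding R0_def by simp
qed

end
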